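(* Let $A$ be an Archimedean semiprime $f$-algebra and let $A_b=\{a\in A: a^2\le\mu|a|\text{ for some }\mu\in(0,\infty)\}$. For $a\in A$, we have $a\in A_b$ if and only if $a^2\in A_b$.
   Context: An $f$-algebra is a real associative algebra that is a vector lattice with $A_+A_+\subseteq A_+$ and such that $a\wedge b=0$ implies $ac\wedge b=ca\wedge b=0$ for all $c\in A_+$; it is semiprime if $0$ is its only nilpotent element. *)

theory Defs
  imports Complex_Main
begin

text \<open>Ambient type: a real associative (not necessarily unital) algebra that is an
ordered real vector space whose order is a lattice, i.e. a vector lattice
(Riesz space).\<close>

definition vabs :: "'a::{ordered_real_vector, lattice} \<Rightarrow> 'a" where
  "vabs a = sup a (- a)"

definition f_algebra :: "'a::{real_algebra, ordered_real_vector, lattice} itself \<Rightarrow> bool" where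
  "f_algebra _ \<longleftrightarrow>
     (\<forall>a b::'a. 0 \<le> a \<longrightarrow> 0 \<le> b \<longrightarrow> 0 \<le> a * b) \<and>
     (\<forall>a b c::'a. inf a b = 0 \<longrightarrow> 0 \<le> c \<longrightarrow> inf (a * c) b = 0 \<and> inf (c * a) b = 0)"

definition archimedean_vl :: "'a::{ordered_real_vector, lattice} itself \<Rightarrow> bool" where
  "archimedean_vl _ \<longleftrightarrow>
     (\<forall>a b::'a. 0 \<le> a \<longrightarrow> (\<forall>n::nat. real n *\<^sub>R a \<le> b) \<longrightarrow> a = 0)"

text \<open>Powers in a possibly non-unital algebra: npow n a = a^(n+1).\<close>
fun npow :: "nat \<Rightarrow> 'a::semigroup_mult \<Rightarrow> 'a" where
  "npow 0 a = a"
| "npow (Suc n) a = a * npow n a"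

definition nilpotent :: "'a::{semigroup_mult, zero} \<Rightarrow> bool" where
  "nilpotent a \<longleftrightarrow> (\<exists>n. npow n a = 0)"

definition semiprime :: "'a::{real_algebra} itself \<Rightarrow> bool" where
  "semiprime _ \<longleftrightarrow> (\<forall>a::'a. nilpotent a \<longrightarrow> a = 0)"

definition bounded_part :: "'a::{real_algebra, ordered_real_vector, lattice} set" where
  "bounded_part = {a. \<exists>\<mu>::real. 0 < \<mu> \<and> a * a \<le> \<mu> *\<^sub>R vabs a}"

end

theory Submission
  imports Defs "HOL-Library.Lattice_Algebras"
begin

lemma aeis: "sup a b + inf a b = (a::'a::{ordered_real_vector,lattice}) + b"
proof -
  interpret L: lattice_ab_group_add "(+)" "0::'a" "(-)" uminus "(\<le>)" "(<)" inf sup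
    by unfold_locales
  show ?thesis by (rule L.add_eq_inf_sup[symmetric])
qed

lemma asdl: "(a::'a::{ordered_real_vector,lattice}) + sup b c = sup (a + b) (a + c)"
proof -
  interpret L: lattice_ab_group_add "(+)" "0::'a" "(-)" uminus "(\<le>)" "(<)" inf sup
    by unfold_locales
  show ?thesis by (rule L.add_sup_distrib_left)
qed

lemma nies: "- inf a b = sup (- a) (- (b::'a::{ordered_real_vector,lattice}))"
proof -
  interpret L: lattice_ab_group_add "(+)" "0::'a" "(-)" uminus "(\<le>)" "(<)" inf sup
    by unfold_locales
  show ?thesis by (rule L.neg_inf_eq_sup)
qed

lemma vabs_nonneg: "0 \<le> vabs (a::'a::{ordered_real_vector,lattice})"
proof -
  interpret L: lattice_ab_group_add "(+)" "0::'a" "(-)" uminus "(\<le>)" "(<)" inf sup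
    by unfold_locales
  have "a + - a \<le> sup a (- a) + sup a (- a)"
    by (intro add_mono) auto
  then have "0 \<le> sup a (- a) + sup a (- a)" by simp
  then show ?thesis unfolding vabs_def
    using L.zero_le_double_add_iff_zero_le_single_add by blast
qed

lemma vabs_pos: "0 \<le> (x::'a::{ordered_real_vector,lattice}) \<Longrightarrow> vabs x = x"
proof -
  assume x0: "0 \<le> x"
  have "- x \<le> 0" using x0 by simp
  then have "- x \<le> x" using x0 by (rule order_trans)
  then show ?thesis unfolding vabs_def by (rule sup_absorb1)
qed

lemma parts:
  fixes a :: "'a::{ordered_real_vector,lattice}"
  shows "inf (sup a 0) (sup (- a) 0) = 0" "a = sup a 0 - sup (- a) 0"
    "vabs a = sup a 0 + sup (- a) 0"
proof -
  define P where "P = sup a 0"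
  define N where "N = sup (- a) 0"
  have N: "N = - inf a 0" unfolding N_def by (simp add: nies)
  have PN: "P - N = a" using aeis[of a 0] unfolding P_def N by simp
  show "a = sup a 0 - sup (- a) 0" using PN P_def N_def by simp
  define m where "m = inf P N"
  have m0: "0 \<le> m" unfolding m_def P_def N_def by simp
  have pm: "P - m \<ge> 0" and nm: "N - m \<ge> 0" unfolding m_def by auto
  have "a = (P - m) - (N - m)" using PN by simp
  also have "\<dots> \<le> P - m" using nm by simp
  finally have "a \<le> P - m" .
  with pm have "P \<le> P - m" unfolding P_def by simp
  then have "m \<le> 0" by simp
  have "m = 0" using \<open>m \<le> 0\<close> m0 by (rule order_antisym)
  then show "inf (sup a 0) (sup (- a) 0) = 0" unfolding m_def P_def N_def by simp
  have "P + N = P + sup (- a) 0" unfolding N_def ..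
  also have "\<dots> = sup (P + - a) (P + 0)" by (rule asdl)
  also have "P + - a = N" using PN by (simp add: algebra_simps)
  finally have "P + N = sup (sup (- a) 0) (sup a 0)" unfolding N_def P_def by simp
  also have "\<dots> = sup (sup a (- a)) 0" by (simp add: sup_aci)
  also have "\<dots> = vabs a" using vabs_nonneg[of a] unfolding vabs_def by (simp add: sup.absorb1)
  finally show "vabs a = sup a 0 + sup (- a) 0" unfolding P_def N_def by simp
qed

lemma fa_nonneg:
  assumes "f_algebra TYPE('a::{real_algebra, ordered_real_vector, lattice})"
    and "0 \<le> (x::'a)" "0 \<le> y"
  shows "0 \<le> x * y"
  using assms unfolding f_algebra_def by blast

lemma fa_mono_left:
  assumes "f_algebra TYPE('a::{real_algebra, ordered_real_vector, lattice})"
    and "0 \<le> (c::'a)" "x \<le> y"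
  shows "c * x \<le> c * y"
proof -
  have "0 \<le> c * (y - x)" using fa_nonneg[OF assms(1,2)] assms(3) by simp
  then show ?thesis by (simp add: algebra_simps)
qed

lemma fa_disj:
  assumes F: "f_algebra TYPE('a::{real_algebra, ordered_real_vector, lattice})"
    and d: "inf (x::'a) y = 0"
  shows "x * y = 0"
proof -
  have x0: "0 \<le> x" and y0: "0 \<le> y" using d by (metis inf.cobounded1 inf.cobounded2)+
  have ax: "\<And>a b c::'a. inf a b = 0 \<Longrightarrow> 0 \<le> c \<Longrightarrow> inf (a * c) b = 0 \<and> inf (c * a) b = 0"
    using F unfolding f_algebra_def by blast
  have "inf (x * y) y = 0" using ax[OF d y0] by blast
  then have "inf y (x * y) = 0" by (simp add: inf.commute)
  from ax[OF this x0] have "inf (x * y) (x * y) = 0" by blast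
  then show ?thesis by simp
qed

lemma sq_facts:
  assumes F: "f_algebra TYPE('a::{real_algebra, ordered_real_vector, lattice})"
  shows "(a::'a) * a = vabs a * vabs a" "0 \<le> a * a"
proof -
  define P where "P = sup a 0"
  define N where "N = sup (- a) 0"
  have d: "inf P N = 0" unfolding P_def N_def by (rule parts(1))
  have a: "a = P - N" unfolding P_def N_def by (rule parts(2))
  have v: "vabs a = P + N" unfolding P_def N_def by (rule parts(3))
  have "P * N = 0" using fa_disj[OF F d] .
  moreover have "N * P = 0" using fa_disj[OF F] d by (simp add: inf.commute)
  moreover have "a * a = (P - N) * (P - N)" using a by simp
  moreover have "vabs a * vabs a = (P + N) * (P + N)" by (simp only: v)
  ultimately have e1: "a * a = P * P + N * N" "vabs a * vabs a = P * P + N * N"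
    by (simp_all add: algebra_simps)
  then show "a * a = vabs a * vabs a" by simp
  have "0 \<le> P" "0 \<le> N" unfolding P_def N_def by simp_all
  then show "0 \<le> a * a" unfolding e1 using fa_nonneg[OF F] by (simp add: add_nonneg_nonneg)
qed

theorem lemma7:
  fixes a :: "'a::{real_algebra, ordered_real_vector, lattice}"
  assumes "f_algebra TYPE('a)"
    and "archimedean_vl TYPE('a)"
    and "semiprime TYPE('a)"
  shows "a \<in> bounded_part \<longleftrightarrow> a * a \<in> bounded_part"
proof -
  note F = assms(1)
  define b where "b = vabs a"
  have b0: "0 \<le> b" unfolding b_def by (rule vabs_nonneg)
  have ab: "a * a = b * b" unfolding b_def by (rule sq_facts(1)[OF F])
  have bb0: "0 \<le> b * b" using fa_nonneg[OF F b0 b0] .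
  have vaa: "vabs (a * a) = b * b" using ab bb0 vabs_pos by metis
  have comm: "(b * b) * b = b * (b * b)" by (simp add: mult.assoc)
  show ?thesis
  proof
    assume "a \<in> bounded_part"
    then obtain \<mu> :: real where mu: "0 < \<mu>" "a * a \<le> \<mu> *\<^sub>R vabs a"
      unfolding bounded_part_def by blast
    then have mu: "0 < \<mu>" "b * b \<le> \<mu> *\<^sub>R b" using ab b_def by simp_all
    have "(b * b) * (b * b) \<le> (b * b) * (\<mu> *\<^sub>R b)"
      by (rule fa_mono_left[OF F bb0 mu(2)])
    also have "\<dots> = \<mu> *\<^sub>R (b * (b * b))" by (simp add: comm)
    also have "\<dots> \<le> \<mu> *\<^sub>R (b * (\<mu> *\<^sub>R b))"
      using mu(1) by (intro scaleR_left_mono fa_mono_left[OF F b0 mu(2)]) simp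
    also have "\<dots> = (\<mu> * \<mu>) *\<^sub>R (b * b)" by simp
    finally have "(a * a) * (a * a) \<le> (\<mu> * \<mu>) *\<^sub>R vabs (a * a)" using vabs_pos[OF bb0] by (simp only: ab)
    moreover have "0 < \<mu> * \<mu>" using mu(1) by simp
    ultimately show "a * a \<in> bounded_part"
      unfolding bounded_part_def by blast
  next
    assume "a * a \<in> bounded_part"
    then obtain \<nu> :: real where nu: "0 < \<nu>" "(a * a) * (a * a) \<le> \<nu> *\<^sub>R vabs (a * a)"
      unfolding bounded_part_def by blast
    then have nu: "0 < \<nu>" "(b * b) * (b * b) \<le> \<nu> *\<^sub>R (b * b)" using ab vaa by simp_all
    define s where "s = sqrt \<nu>"
    have s0: "0 < s" unfolding s_def using nu(1) by simp
    have ss: "s * s = \<nu>" unfolding s_def using nu(1) by simp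
    define d where "d = b * b - s *\<^sub>R b"
    define P where "P = sup d 0"
    define Q where "Q = sup (- d) 0"
    have dPQ: "d = P - Q" unfolding P_def Q_def by (rule parts(2))
    have PQ: "P * Q = 0" using fa_disj[OF F] parts(1)[of d] unfolding P_def Q_def by blast
    have P0: "0 \<le> P" unfolding P_def by simp
    have sb0: "0 \<le> s *\<^sub>R b" using s0 b0 by (simp add: scaleR_nonneg_nonneg)
    have Pbb: "P \<le> b * b" unfolding P_def d_def using sb0 bb0 by simp
    define e where "e = b * b + s *\<^sub>R b"
    have e0: "0 \<le> e" unfolding e_def using bb0 sb0 by simp
    have "d * e = (b * b) * (b * b) - (s * s) *\<^sub>R (b * b)"
      unfolding d_def e_def by (simp add: algebra_simps comm)
    also have "\<dots> \<le> 0" using nu(2) ss by simp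
    finally have de: "d * e \<le> 0" .
    have "P * (d * e) \<le> P * 0" by (rule fa_mono_left[OF F P0 de])
    moreover have "P * d = P * P" unfolding dPQ by (simp add: right_diff_distrib PQ)
    then have "P * (d * e) = (P * P) * e" by (simp only: mult.assoc[symmetric])
    ultimately have le: "(P * P) * e \<le> 0" by simp
    have PP0: "0 \<le> P * P" using fa_nonneg[OF F P0 P0] .
    have "(P * P) * e = 0" using le fa_nonneg[OF F PP0 e0] by (rule order_antisym)
    then have sum0: "(P * P) * (b * b) + s *\<^sub>R ((P * P) * b) = 0"
      unfolding e_def by (simp add: algebra_simps)
    have t1: "0 \<le> (P * P) * (b * b)" using fa_nonneg[OF F PP0 bb0] .
    have t2: "0 \<le> s *\<^sub>R ((P * P) * b)" using fa_nonneg[OF F PP0 b0] s0 by (simp add: scaleR_nonneg_nonneg)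
    have "(P * P) * (b * b) = - (s *\<^sub>R ((P * P) * b))" using sum0
      by (simp add: eq_neg_iff_add_eq_0)
    also have "\<dots> \<le> 0" using t2 by simp
    finally have "(P * P) * (b * b) = 0" using t1 by (rule order_antisym)
    moreover have "(P * P) * P \<le> (P * P) * (b * b)" by (rule fa_mono_left[OF F PP0 Pbb])
    moreover have "0 \<le> (P * P) * P" using fa_nonneg[OF F PP0 P0] .
    ultimately have "(P * P) * P = 0" by (metis order_antisym)
    then have "npow 2 P = 0" by (simp add: numeral_2_eq_2 mult.assoc)
    then have "P = 0" using assms(3) unfolding semiprime_def nilpotent_def by blast
    then have "d \<le> 0" unfolding P_def by (metis sup.cobounded1)
    then have "b * b \<le> s *\<^sub>R b" unfolding d_def by simp
    then have "a * a \<le> s *\<^sub>R vabs a" by (simp only: ab b_def)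
    then show "a \<in> bounded_part"
      unfolding bounded_part_def using s0 by blast
  qed
qed

end
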